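(* Let $a,b\in\mathbb{R}$ and let $n$ be a non-negative integer. Let $L^{a,b}_n=(d^{(n)}_{i,j})_{i,j\in\mathbb{N}}$ be the infinite lower triangular matrix with $d^{(n)}_{i,j}=a+jb$ if $i-j=n$ and $d^{(n)}_{i,j}=0$ otherwise. Then $L^{a,b}_n=L(ax^n,bx^n)$ belongs to the Lie algebra $\mathcal{L}(\mathcal{R}(\mathbb{R}))$ of the Riordan group, and for every $t\in\mathbb{R}$ the matrix $e^{tL^{a,b}_n}$ is the Riordan matrix $$e^{tL^{a,b}_n}=\begin{cases} T\!\left((1-bntx^n)^{\frac{b-a}{nb}}\ \middle|\ (1-bntx^n)^{\frac1n}\right) & \text{if } b\neq 0 \text{ (and } n\ge 1),\\[4pt] T\!\left(e^{atx^n}\ \middle|\ 1\right) & \text{if } b=0.\end{cases}$$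
   Context: All formal power series are in $\mathbb{R}[[x]]$. For $f,g\in\mathbb{R}[[x]]$ with $f(0)\neq0$, $g(0)\neq 0$, the Riordan matrix $T(f\mid g)=(d_{i,j})_{i,j\ge0}$ is the infinite lower triangular matrix with $d_{i,j}=[x^i]\dfrac{x^jf(x)}{g(x)^{j+1}}$ (the generating function of column $j$ is $x^jf/g^{j+1}$). The Riordan group $\mathcal{R}(\mathbb{R})$ is the set of all such matrices under matrix multiplication. For $\chi(x)=\sum\chi_kx^k$, $\alpha(x)=\sum\alpha_kx^k\in\mathbb{R}[[x]]$, $L(\chi,\alpha)$ denotes the infinite lower triangular matrix with entries $\ell_{i,j}=\chi_{i-j}+j\,\alpha_{i-j}$ for $i\ge j$ and $0$ for $i<j$; the Lie algebra of the Riordan group is $\mathcal{L}(\mathcal{R}(\mathbb{R}))=\{L(\chi,\alpha):\chi,\alpha\in\mathbb{R}[[x]]\}$. For an infinite lower triangular matrix $L$, $e^{tL}$ is the infinite lower triangular matrix whose leading $(m+1)\times(m+1)$ block equals the usual matrix exponential of the leading $(m+1)\times(m+1)$ block of $tL$, for every $m$. For $c\in\mathbb{R}$ and a real constant $s$, $(1-sx^n)^c$ denotes the formal power series $\sum_{k\ge0}\binom{c}{k}(-s)^kx^{nk}$ with generalized binomial coefficients. *)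

theory Defs
  imports "HOL-Computational_Algebra.Formal_Power_Series"
begin

definition riordan :: "real fps \<Rightarrow> real fps \<Rightarrow> nat \<Rightarrow> nat \<Rightarrow> real" where
  "riordan f g i j = fps_nth (fps_X ^ j * f * inverse (g ^ Suc j)) i"

definition lieL :: "real fps \<Rightarrow> real fps \<Rightarrow> nat \<Rightarrow> nat \<Rightarrow> real" where
  "lieL chi alpha i j = (if j \<le> i then fps_nth chi (i - j) + real j * fps_nth alpha (i - j) else 0)"

definition in_riordan_lie_algebra :: "(nat \<Rightarrow> nat \<Rightarrow> real) \<Rightarrow> bool" where
  "in_riordan_lie_algebra L \<longleftrightarrow> (\<exists>chi alpha. L = lieL chi alpha)"

definition Lab :: "real \<Rightarrow> real \<Rightarrow> nat \<Rightarrow> nat \<Rightarrow> nat \<Rightarrow> real" where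
  "Lab a b n i j = (if i \<ge> j \<and> i - j = n then a + real j * b else 0)"

definition blk_mult :: "nat \<Rightarrow> (nat \<Rightarrow> nat \<Rightarrow> real) \<Rightarrow> (nat \<Rightarrow> nat \<Rightarrow> real) \<Rightarrow> nat \<Rightarrow> nat \<Rightarrow> real" where
  "blk_mult m A B i j = (\<Sum>k\<le>m. A i k * B k j)"

fun blk_pow :: "nat \<Rightarrow> (nat \<Rightarrow> nat \<Rightarrow> real) \<Rightarrow> nat \<Rightarrow> nat \<Rightarrow> nat \<Rightarrow> real" where
  "blk_pow m A 0 = (\<lambda>i j. if i = j then 1 else 0)"
| "blk_pow m A (Suc k) = blk_mult m A (blk_pow m A k)"

definition blk_exp :: "nat \<Rightarrow> (nat \<Rightarrow> nat \<Rightarrow> real) \<Rightarrow> nat \<Rightarrow> nat \<Rightarrow> real" where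
  "blk_exp m A i j = (\<Sum>k. blk_pow m A k i j / fact k)"

text \<open>e^{L}: the infinite matrix whose every leading block is the exponential of the block.\<close>
definition is_mat_exp :: "(nat \<Rightarrow> nat \<Rightarrow> real) \<Rightarrow> (nat \<Rightarrow> nat \<Rightarrow> real) \<Rightarrow> bool" where
  "is_mat_exp L E \<longleftrightarrow> (\<forall>m i j. i \<le> m \<longrightarrow> j \<le> m \<longrightarrow> E i j = blk_exp m L i j)"

text \<open>(1 - s x^n)^c = sum_k (c choose k) (-s)^k x^{nk}  (used for n >= 1).\<close>
definition binpow_xn :: "real \<Rightarrow> nat \<Rightarrow> real \<Rightarrow> real fps" where
  "binpow_xn s n c = Abs_fps (\<lambda>i. if n dvd i then (c gchoose (i div n)) * (-s) ^ (i div n) else 0)"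

definition exp_xn :: "real \<Rightarrow> nat \<Rightarrow> real fps" where
  "exp_xn c n = (if n = 0 then fps_const (exp c) else fps_compose (fps_exp c) (fps_X ^ n))"

end

theory Submission
  imports Defs
begin

unbundle fps_syntax

lemma comp_Xn:
  assumes "n \<ge> 1"
  shows "(h oo fps_X^n) $ m = (if n dvd m then h $ (m div n) else (0::real))"
proof -
  have "(h oo fps_X^n) $ m = (\<Sum>i\<in>{0..m}. if i = m div n \<and> n dvd m then h $ i else 0)"
    unfolding fps_compose_nth
  proof (rule sum.cong[OF refl])
    fix i assume "i \<in> {0..m}"
    have e: "(m = n * i) \<longleftrightarrow> (i = m div n \<and> n dvd m)" using assms by auto
    show "h $ i * ((fps_X ^ n) ^ i) $ m = (if i = m div n \<and> n dvd m then h $ i else 0)"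
      by (simp add: power_mult[symmetric] e[symmetric] mult.commute)
  qed
  also have "\<dots> = (if n dvd m then h $ (m div n) else 0)"
  proof (cases "n dvd m")
    case True
    have "m div n \<le> m" by simp
    then show ?thesis using True by (simp add: sum.delta')
  qed simp
  finally show ?thesis .
qed

definition Pw :: "real \<Rightarrow> real \<Rightarrow> real fps" where
  "Pw s c = Abs_fps (\<lambda>k. (c gchoose k) * (-s)^k)"

lemma binpow_comp: "n \<ge> 1 \<Longrightarrow> binpow_xn s n c = Pw s c oo fps_X^n"
  by (rule fps_ext) (simp add: comp_Xn binpow_xn_def Pw_def)

lemma Pw_mult: "Pw s c * Pw s d = Pw s (c + d)"
proof (rule fps_ext)
  fix m
  have "(Pw s c * Pw s d) $ m = (\<Sum>i=0..m. ((c gchoose i) * (d gchoose (m - i))) * (-s)^m)"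
    unfolding fps_mult_nth Pw_def
  proof (rule sum.cong[OF refl])
    fix i assume "i \<in> {0..m}"
    then have "(-s)^i * (-s)^(m-i) = (-s)^m" by (simp add: power_add[symmetric])
    then show "Abs_fps (\<lambda>k. (c gchoose k) * (- s) ^ k) $ i * Abs_fps (\<lambda>k. (d gchoose k) * (- s) ^ k) $ (m - i) =
         (c gchoose i) * (d gchoose (m - i)) * (- s) ^ m"
      by (simp add: algebra_simps)
  qed
  also have "\<dots> = ((c + d) gchoose m) * (-s)^m"
    by (simp add: sum_distrib_right[symmetric] gbinomial_Vandermonde)
  finally show "(Pw s c * Pw s d) $ m = Pw s (c + d) $ m" by (simp add: Pw_def)
qed

lemma Pw_0: "Pw s 0 = 1"
proof (rule fps_ext)
  fix m show "Pw s 0 $ m = 1 $ m"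
    by (cases m) (simp_all add: Pw_def gbinomial_0_left)
qed

lemma binpow_mult: "n \<ge> 1 \<Longrightarrow> binpow_xn s n c * binpow_xn s n d = binpow_xn s n (c + d)"
  by (simp add: binpow_comp fps_compose_mult_distrib[symmetric] Pw_mult)

lemma binpow_0: "n \<ge> 1 \<Longrightarrow> binpow_xn s n 0 = 1"
  by (simp add: binpow_comp Pw_0)

lemma binpow_power: "n \<ge> 1 \<Longrightarrow> binpow_xn s n c ^ k = binpow_xn s n (real k * c)"
  by (induction k) (simp_all add: binpow_0 binpow_mult algebra_simps)

lemma binpow_inverse: "n \<ge> 1 \<Longrightarrow> inverse (binpow_xn s n c) = binpow_xn s n (- c)"
  by (rule fps_inverse_unique) (simp add: binpow_mult binpow_0)

lemma blk_pow_formula: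
  fixes w :: "nat \<Rightarrow> real"
  assumes A: "\<And>i l. A i l = (if l \<le> i \<and> i - l = n then w l else 0)"
  shows "i \<le> m \<Longrightarrow> blk_pow m A k i j = (if i = j + n*k then (\<Prod>r<k. w (j + n*r)) else 0)"
proof (induction k arbitrary: i)
  case 0
  then show ?case by simp
next
  case (Suc k)
  have "blk_pow m A (Suc k) i j = (\<Sum>l\<le>m. A i l * blk_pow m A k l j)"
    by (simp add: blk_mult_def)
  also have "\<dots> = (\<Sum>l\<le>m. if l = i - n then (if n \<le> i then w l * blk_pow m A k l j else 0) else 0)"
    by (rule sum.cong[OF refl]) (auto simp: A)
  also have "\<dots> = (if n \<le> i then w (i - n) * blk_pow m A k (i - n) j else 0)"
    using Suc.prems by (simp add: sum.delta' le_trans[OF diff_le_self])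
  also have "\<dots> = (if i = j + n * Suc k then (\<Prod>r<Suc k. w (j + n*r)) else 0)"
  proof (cases "n \<le> i")
    case True
    have "i - n \<le> m" using Suc.prems by simp
    note IH = Suc.IH[OF this]
    have e: "(i - n = j + n * k) = (i = j + n * Suc k)" using True by (auto simp: mult_Suc_right)
    show ?thesis using True by (simp only: IH e if_True) (auto simp: mult_Suc_right)
  next
    case False
    then show ?thesis by auto
  qed
  finally show ?case .
qed

lemma A_shape: "(\<lambda>i j. t * Lab a b n i j) i l = (if l \<le> i \<and> i - l = n then t * (a + real l * b) else 0)"
  by (simp add: Lab_def)

lemma exp_formula:
  assumes "i \<le> m" "n \<ge> 1"
  shows "blk_exp m (\<lambda>i j. t * Lab a b n i j) i j =
    (if j \<le> i \<and> n dvd (i - j) then (\<Prod>r<(i-j) div n. t * (a + real (j + n*r) * b)) / fact ((i-j) div n) else 0)"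
proof -
  let ?w = "\<lambda>l. t * (a + real l * b)"
  have P: "\<And>k. blk_pow m (\<lambda>i j. t * Lab a b n i j) k i j = (if i = j + n*k then (\<Prod>r<k. ?w (j + n*r)) else 0)"
    by (rule blk_pow_formula[OF A_shape assms(1)])
  show ?thesis
  proof (cases "j \<le> i \<and> n dvd (i - j)")
    case True
    define k0 where "k0 = (i - j) div n"
    have ik: "\<And>k. (i = j + n*k) = (k = k0)" using True assms(2) by (auto simp: k0_def)
    have "(\<lambda>k. blk_pow m (\<lambda>i j. t * Lab a b n i j) k i j / fact k) =
       (\<lambda>k. if k = k0 then (\<Prod>r<k. ?w (j + n*r)) / fact k else 0)"
      by (auto simp: P ik)
    then have "(\<lambda>k. blk_pow m (\<lambda>i j. t * Lab a b n i j) k i j / fact k) sums ((\<Prod>r<k0. ?w (j + n*r)) / fact k0)"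
      using sums_single[of k0 "\<lambda>k. (\<Prod>r<k. ?w (j + n*r)) / fact k"] by simp
    then show ?thesis using True unfolding blk_exp_def k0_def by (simp add: sums_iff)
  next
    case False
    have "\<And>k. i \<noteq> j + n*k" using False by auto
    then have "blk_exp m (\<lambda>i j. t * Lab a b n i j) i j = 0" unfolding blk_exp_def by (simp add: P)
    then show ?thesis by (subst if_not_P[OF False]) simp
  qed
qed

lemma exp_formula0:
  assumes "i \<le> m"
  shows "blk_exp m (\<lambda>i j. t * Lab a b 0 i j) i j = (if i = j then exp (t * (a + real j * b)) else 0)"
proof -
  let ?w = "\<lambda>l. t * (a + real l * b)"
  have P: "\<And>k. blk_pow m (\<lambda>i j. t * Lab a b 0 i j) k i j = (if i = j then ?w j ^ k else 0)"
    using blk_pow_formula[OF A_shape[of t a b 0] assms(1)] by simp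
  show ?thesis
  proof (cases "i = j")
    case True
    have "(\<lambda>k. ?w j ^ k /\<^sub>R fact k) sums exp (?w j)" by (rule exp_converges)
    then have "(\<lambda>k. blk_pow m (\<lambda>i j. t * Lab a b 0 i j) k i j / fact k) sums exp (?w j)"
      using True by (simp add: P[unfolded True] divide_inverse mult.commute)
    then show ?thesis using True unfolding blk_exp_def by (simp add: sums_iff)
  qed (simp add: blk_exp_def P)
qed

theorem mainTheorem1:
  fixes a b :: real and n :: nat
  shows "Lab a b n = lieL (fps_const a * fps_X ^ n) (fps_const b * fps_X ^ n)
    \<and> in_riordan_lie_algebra (Lab a b n)
    \<and> (b \<noteq> 0 \<longrightarrow> n \<ge> 1 \<longrightarrow> (\<forall>t::real.
          is_mat_exp (\<lambda>i j. t * Lab a b n i j)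
            (riordan (binpow_xn (b * real n * t) n ((b - a) / (real n * b)))
                     (binpow_xn (b * real n * t) n (1 / real n)))))
    \<and> (b = 0 \<longrightarrow> (\<forall>t::real.
          is_mat_exp (\<lambda>i j. t * Lab a b n i j) (riordan (exp_xn (a * t) n) 1)))"
proof (intro conjI impI allI)
  show L: "Lab a b n = lieL (fps_const a * fps_X ^ n) (fps_const b * fps_X ^ n)"
    by (intro ext) (auto simp: Lab_def lieL_def)
  show "in_riordan_lie_algebra (Lab a b n)"
    unfolding in_riordan_lie_algebra_def using L by blast
next
  fix t :: real
  assume b: "b \<noteq> 0" and n: "n \<ge> 1"
  let ?s = "b * real n * t"
  show "is_mat_exp (\<lambda>i j. t * Lab a b n i j)
            (riordan (binpow_xn ?s n ((b - a) / (real n * b))) (binpow_xn ?s n (1 / real n)))"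
    unfolding is_mat_exp_def
  proof (intro allI impI)
    fix m i j :: nat assume im: "i \<le> m" and jm: "j \<le> m"
    define e where "e = -(a + real j * b) / (real n * b)"
    have ee: "(b - a) / (real n * b) + (- (1 / real n) - real j / real n) = e"
      using b n by (simp add: e_def field_simps)
    have R: "riordan (binpow_xn ?s n ((b - a) / (real n * b))) (binpow_xn ?s n (1 / real n)) i j
       = (if j \<le> i then binpow_xn ?s n e $ (i - j) else 0)"
      unfolding riordan_def using n
      by (simp add: binpow_power binpow_inverse binpow_mult ee mult.assoc fps_X_power_mult_nth)
    show "riordan (binpow_xn ?s n ((b - a) / (real n * b))) (binpow_xn ?s n (1 / real n)) i j =
          blk_exp m (\<lambda>i j. t * Lab a b n i j) i j"
    proof (cases "j \<le> i \<and> n dvd (i - j)")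
      case True
      define k where "k = (i - j) div n"
      have "(e gchoose k) * (-?s)^k = (\<Prod>r<k. (e - real r) * (-?s)) / fact k"
        unfolding gbinomial_prod_rev prod.distrib atLeast0LessThan prod_constant card_lessThan by simp
      also have "\<dots> = (\<Prod>r<k. t * (a + real (j + n*r) * b)) / fact k"
        by (rule arg_cong2[where f="(/)"], rule prod.cong) (use b n in \<open>auto simp: e_def field_simps\<close>)
      finally show ?thesis using True n
        by (subst R) (simp add: exp_formula[OF im n] binpow_xn_def k_def)
    next
      case False
      then show ?thesis using n by (subst R) (auto simp: exp_formula[OF im n] binpow_xn_def)
    qed
  qed
next
  fix t :: real
  assume b: "b = 0"
  show "is_mat_exp (\<lambda>i j. t * Lab a b n i j) (riordan (exp_xn (a * t) n) 1)"
    unfolding is_mat_exp_def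
  proof (intro allI impI)
    fix m i j :: nat assume im: "i \<le> m" and jm: "j \<le> m"
    show "riordan (exp_xn (a * t) n) 1 i j = blk_exp m (\<lambda>i j. t * Lab a b n i j) i j"
    proof (cases "n = 0")
      case True
      then show ?thesis using b
        by (simp add: riordan_def exp_xn_def exp_formula0[OF im] fps_X_power_mult_nth mult.commute)
    next
      case False
      then have n: "n \<ge> 1" by simp
      show ?thesis using b n
        by (auto simp: riordan_def exp_xn_def exp_formula[OF im n] fps_X_power_mult_nth comp_Xn
            power_mult_distrib mult.commute)
    qed
  qed
qed

end
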